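(* Let $n\ge2$, $\omega\in\mathbb{R}^n$, $k\in\mathbb{R}_{>0}^n$ satisfy (IC1) $\sum_\mu\omega_\mu=0$, (IC2) $\omega\ne0$, (IC3) $\left|\frac{\omega_1}{k_1}\right|\le\cdots\le\left|\frac{\omega_n}{k_n}\right|$. Let $\sigma\in\{-1,+1\}^n$ and $f_\sigma(R)=-R+\frac1n\sum_{\mu=1}^n\sigma_\mu\sqrt{k_\mu^2R-\omega_\mu^2}$. If $s_\ell=\sum_{\mu=1}^\ell\sigma_\mu k_\mu\le0$ for all $\ell=1,\ldots,n$, then $f_\sigma$ has no positive roots.
   Context: Square roots are nonnegative real square roots; a positive root of $f_\sigma$ is a real $R>0$ with $k_\mu^2R-\omega_\mu^2\ge0$ for all $\mu$ and $f_\sigma(R)=0$. *)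

theory Defs
  imports Complex_Main
begin

definition f_sigma :: "nat \<Rightarrow> (nat \<Rightarrow> real) \<Rightarrow> (nat \<Rightarrow> real) \<Rightarrow> (nat \<Rightarrow> real) \<Rightarrow> real \<Rightarrow> real" where
  "f_sigma n \<sigma> k \<omega> R = - R + (1 / real n) * (\<Sum>\<mu>=1..n. \<sigma> \<mu> * sqrt ((k \<mu>)\<^sup>2 * R - (\<omega> \<mu>)\<^sup>2))"

definition positive_root :: "nat \<Rightarrow> (nat \<Rightarrow> real) \<Rightarrow> (nat \<Rightarrow> real) \<Rightarrow> (nat \<Rightarrow> real) \<Rightarrow> real \<Rightarrow> bool" where
  "positive_root n \<sigma> k \<omega> R \<longleftrightarrow> R > 0 \<and> (\<forall>\<mu>\<in>{1..n}. (k \<mu>)\<^sup>2 * R - (\<omega> \<mu>)\<^sup>2 \<ge> 0) \<and> f_sigma n \<sigma> k \<omega> R = 0"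

end

theory Submission
  imports Defs
begin

lemma abel_aux:
  fixes c g :: "nat \<Rightarrow> real"
  assumes dec: "\<forall>\<mu>\<in>{1..<n}. g (\<mu>+1) \<le> g \<mu>"
    and s: "\<forall>l\<in>{1..n}. (\<Sum>\<mu>=1..l. c \<mu>) \<le> 0"
  shows "m \<le> n \<Longrightarrow> (\<Sum>\<mu>=1..m. c \<mu> * g \<mu>) \<le> (\<Sum>\<mu>=1..m. c \<mu>) * g m"
proof (induction m)
  case 0
  then show ?case by simp
next
  case (Suc m)
  show ?case
  proof (cases "m = 0")
    case True
    then show ?thesis by simp
  next
    case False
    have IH: "(\<Sum>\<mu>=1..m. c \<mu> * g \<mu>) \<le> (\<Sum>\<mu>=1..m. c \<mu>) * g m" using Suc by simp
    have sm: "(\<Sum>\<mu>=1..m. c \<mu>) \<le> 0" using s Suc.prems False by auto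
    have gm: "g (m+1) \<le> g m" using dec Suc.prems False by auto
    have "(\<Sum>\<mu>=1..m. c \<mu>) * g m \<le> (\<Sum>\<mu>=1..m. c \<mu>) * g (m+1)"
      using sm gm by (simp add: mult_left_mono_neg)
    then have "(\<Sum>\<mu>=1..Suc m. c \<mu> * g \<mu>) \<le> (\<Sum>\<mu>=1..m. c \<mu>) * g (m+1) + c (Suc m) * g (Suc m)"
      using IH by simp
    also have "\<dots> = (\<Sum>\<mu>=1..Suc m. c \<mu>) * g (Suc m)" by (simp add: algebra_simps)
    finally show ?thesis .
  qed
qed

theorem proposition2:
  fixes n :: nat and \<omega> k \<sigma> :: "nat \<Rightarrow> real"
  assumes n2: "n \<ge> 2"
    and kpos: "\<forall>\<mu>\<in>{1..n}. k \<mu> > 0"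
    and IC1: "(\<Sum>\<mu>=1..n. \<omega> \<mu>) = 0"
    and IC2: "\<exists>\<mu>\<in>{1..n}. \<omega> \<mu> \<noteq> 0"
    and IC3: "\<forall>\<mu>\<in>{1..<n}. \<bar>\<omega> \<mu> / k \<mu>\<bar> \<le> \<bar>\<omega> (\<mu>+1) / k (\<mu>+1)\<bar>"
    and sigma: "\<forall>\<mu>\<in>{1..n}. \<sigma> \<mu> = -1 \<or> \<sigma> \<mu> = 1"
    and s_nonpos: "\<forall>l\<in>{1..n}. (\<Sum>\<mu>=1..l. \<sigma> \<mu> * k \<mu>) \<le> 0"
  shows "\<not> (\<exists>R. positive_root n \<sigma> k \<omega> R)"
proof
  assume "\<exists>R. positive_root n \<sigma> k \<omega> R"
  then obtain R where R0: "R > 0" and rad: "\<forall>\<mu>\<in>{1..n}. (k \<mu>)\<^sup>2 * R - (\<omega> \<mu>)\<^sup>2 \<ge> 0"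
    and f0: "f_sigma n \<sigma> k \<omega> R = 0" unfolding positive_root_def by blast
  define g where "g \<mu> = sqrt (R - (\<omega> \<mu> / k \<mu>)\<^sup>2)" for \<mu>
  have eq: "sqrt ((k \<mu>)\<^sup>2 * R - (\<omega> \<mu>)\<^sup>2) = k \<mu> * g \<mu>" if "\<mu> \<in> {1..n}" for \<mu>
  proof -
    have kp: "k \<mu> > 0" using kpos that by auto
    have "(k \<mu>)\<^sup>2 * R - (\<omega> \<mu>)\<^sup>2 = (k \<mu>)\<^sup>2 * (R - (\<omega> \<mu> / k \<mu>)\<^sup>2)"
      using kp by (simp add: field_simps power2_eq_square)
    then show ?thesis using kp by (simp add: g_def real_sqrt_mult)
  qed
  have dec: "\<forall>\<mu>\<in>{1..<n}. g (\<mu>+1) \<le> g \<mu>"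
  proof
    fix \<mu> assume "\<mu> \<in> {1..<n}"
    then have "\<bar>\<omega> \<mu> / k \<mu>\<bar> \<le> \<bar>\<omega> (\<mu>+1) / k (\<mu>+1)\<bar>" using IC3 by auto
    then have "(\<omega> \<mu> / k \<mu>)\<^sup>2 \<le> (\<omega> (\<mu>+1) / k (\<mu>+1))\<^sup>2"
      by (metis abs_ge_zero power2_abs power_mono)
    then show "g (\<mu>+1) \<le> g \<mu>" unfolding g_def by simp
  qed
  have gn: "g n \<ge> 0"
  proof -
    have nn: "n \<in> {1..n}" using n2 by auto
    have "k n * g n \<ge> 0" using eq[OF nn] rad nn by (metis real_sqrt_ge_zero)
    moreover have "k n > 0" using kpos nn by auto
    ultimately show ?thesis by (simp add: zero_le_mult_iff)
  qed
  have "(\<Sum>\<mu>=1..n. \<sigma> \<mu> * sqrt ((k \<mu>)\<^sup>2 * R - (\<omega> \<mu>)\<^sup>2)) = (\<Sum>\<mu>=1..n. (\<sigma> \<mu> * k \<mu>) * g \<mu>)"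
    using eq by (intro sum.cong) auto
  also have "\<dots> \<le> (\<Sum>\<mu>=1..n. \<sigma> \<mu> * k \<mu>) * g n"
    using abel_aux[of n g "\<lambda>\<mu>. \<sigma> \<mu> * k \<mu>", OF dec s_nonpos] by simp
  also have "\<dots> \<le> 0" using s_nonpos n2 gn by (simp add: mult_nonpos_nonneg)
  finally have S: "(\<Sum>\<mu>=1..n. \<sigma> \<mu> * sqrt ((k \<mu>)\<^sup>2 * R - (\<omega> \<mu>)\<^sup>2)) \<le> 0" .
  have "(1 / real n) * (\<Sum>\<mu>=1..n. \<sigma> \<mu> * sqrt ((k \<mu>)\<^sup>2 * R - (\<omega> \<mu>)\<^sup>2)) \<le> 0"
    using S by (simp add: divide_nonpos_nonneg)
  then have "f_sigma n \<sigma> k \<omega> R < 0" unfolding f_sigma_def using R0 by linarith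
  then show False using f0 by simp
qed

end
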